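(* Consider Algorithm 3 (described in the context) under the Standing Assumption, Matrix Assumption and Gradient Assumption of the context. Let $\mathbb{P}_k$ denote probability conditioned on the algorithm having reached $x_k$ at iteration $k$. If there exists $p\in(0,1]$ such that for all $k\in\mathbb{N}$, $$\mathbb{P}_k\big[\bar g_k^T\bar d_k+\max\{\bar d_k^TH_k\bar d_k,0\}\ge g_k^Td_k+\max\{d_k^TH_kd_k,0\}\big]\ge p,$$ then the event $E_{\tau,big}$ occurs with probability zero, where $E_{\tau,big}$ is the event that there exist an infinite set $\overline{\mathcal K}_\tau\subseteq\mathbb{N}$ and $\bar\tau_{big}>0$ such that $\bar\tau_k=\bar\tau_{big}>\tau_k^{trial}$ and $\bar\xi_k=\bar\xi_{\min}$ for all $k\in\overline{\mathcal K}_\tau$.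
   Context: Problem: $\min_x f(x)$ s.t. $c(x)=0$, $f(x)=\mathbb{E}[F(x,\omega)]$, $c:\mathbb{R}^n\to\mathbb{R}^m$ deterministic. Notation: $g_k=\nabla f(x_k)$, $c_k=c(x_k)$, $J_k=\nabla c(x_k)^T$; $\Delta q(x,\tau,g,H,d)=-\tau(g^Td+\frac12\max\{d^THd,0\})+\|c(x)\|_1$. Standing Assumption: there is an open convex set $\mathcal X$ containing all iterates; $f$ is $C^1$ and bounded below on $\mathcal X$ with $\nabla f$ bounded and $L$-Lipschitz on $\mathcal X$; $c$ and $\nabla c^T$ bounded on $\mathcal X$; each $\nabla c_i$ is $\gamma_i$-Lipschitz on $\mathcal X$; singular values of $\nabla c(x)^T$ bounded away from zero uniformly over $\mathcal X$. $\Gamma:=\sum_i\gamma_i$. Matrix Assumption: deterministic symmetric $H_k$, chosen independently of the stochastic gradients, with $\|H_k\|_2\le\kappa_H$ and $u^TH_ku\ge\zeta\|u\|_2^2$ whenever $J_ku=0$. Algorithm 3 (inputs $x_0$, $\bar\tau_{-1}>0$, $\epsilon,\sigma\in(0,1)$, $\bar\xi_{-1}>0$, $\{\beta_k\}\subset(0,1]$, $\theta\ge0$): at iteration $k$, obtain stochastic gradient $\bar g_k$; $(\bar d_k,\bar y_k)$ solves $H_k\bar d_k+J_k^T\bar y_k=-\bar g_k$, $J_k\bar d_k=-c_k$ (assumed $\bar d_k\ne0$). $\bar\tau_k^{trial}=\infty$ if $\bar g_k^T\bar d_k+\max\{\bar d_k^TH_k\bar d_k,0\}\le0$, else $\frac{(1-\sigma)\|c_k\|_1}{\bar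 g_k^T\bar d_k+\max\{\bar d_k^TH_k\bar d_k,0\}}$; $\bar\tau_k=\bar\tau_{k-1}$ if $\bar\tau_{k-1}\le\bar\tau_k^{trial}$, else $(1-\epsilon)\bar\tau_k^{trial}$. $\bar\xi_k^{trial}=\frac{\Delta q(x_k,\bar\tau_k,\bar g_k,H_k,\bar d_k)}{\bar\tau_k\|\bar d_k\|_2^2}$; $\bar\xi_k=\bar\xi_{k-1}$ if $\bar\xi_{k-1}\le\bar\xi_k^{trial}$, else $(1-\epsilon)\bar\xi_k^{trial}$. With $D_k=(\bar\tau_kL+\Gamma)\|\bar d_k\|_2^2$, $\hat a_k=\beta_k\Delta q(x_k,\bar\tau_k,\bar g_k,H_k,\bar d_k)/D_k$, $\tilde a_k=\hat a_k-4\|c_k\|_1/D_k$, project both onto $[a_k,a_k+\theta\beta_k^2]$, $a_k=\frac{\beta_k\bar\xi_k\bar\tau_k}{\bar\tau_kL+\Gamma}$, giving $\widehat\alpha_k,\widetilde\alpha_k$; $\bar\alpha_k=\widehat\alpha_k$ if $\widehat\alpha_k<1$, $1$ if $\widetilde\alpha_k\le1\le\widehat\alpha_k$, $\widetilde\alpha_k$ if $\widetilde\alpha_k>1$; $x_{k+1}=x_k+\bar\alpha_k\bar d_k$. $\bar\xi_{\min}$ denotes the limit of the nonincreasing positive sequence $\{\bar\xi_k\}$. Gradient Assumption: $\mathbb{E}_k[\bar g_k]=g_k$, $\mathbb{E}_k[\|\bar g_k-g_k\|_2^2]\le M$, with $\mathbb{E}_k$ conditioned on reaching $x_k$ at iteration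 $k$. Deterministic counterparts: $(d_k,y_k)$ solves the same system with $g_k$ in place of $\bar g_k$; $\tau_k^{trial}=\infty$ if $g_k^Td_k+\max\{d_k^TH_kd_k,0\}\le0$, else $\frac{(1-\sigma)\|c_k\|_1}{g_k^Td_k+\max\{d_k^TH_kd_k,0\}}$. *)

theory Defs
  imports "HOL-Probability.Probability"
begin

definition l1norm :: "real^'m \<Rightarrow> real" where
  "l1norm v = (\<Sum>i\<in>UNIV. \<bar>v $ i\<bar>)"

definition sqp_dir :: "real^'n^'n \<Rightarrow> real^'n^'m \<Rightarrow> real^'n \<Rightarrow> real^'m \<Rightarrow> real^'n" where
  "sqp_dir H J g cv = (THE d. \<exists>y. H *v d + transpose J *v y = - g \<and> J *v d = - cv)"

definition curv_term :: "real^'n \<Rightarrow> real^'n^'n \<Rightarrow> real^'n \<Rightarrow> real" where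
  "curv_term g H d = g \<bullet> d + max (d \<bullet> (H *v d)) 0"

text \<open>Delta q(x,tau,g,H,d), with cn = ||c(x)||_1\<close>
definition delta_q :: "real \<Rightarrow> real^'n \<Rightarrow> real^'n^'n \<Rightarrow> real^'n \<Rightarrow> real \<Rightarrow> real" where
  "delta_q tau g H d cn = - tau * (g \<bullet> d + 1/2 * max (d \<bullet> (H *v d)) 0) + cn"

text \<open>Trial merit parameter (infinity encoded in ereal), cn = ||c_k||_1\<close>
definition tau_trial :: "real \<Rightarrow> real \<Rightarrow> real^'n \<Rightarrow> real^'n^'n \<Rightarrow> real^'n \<Rightarrow> ereal" where
  "tau_trial sgm cn g H d =
     (if curv_term g H d \<le> 0 then \<infinity> else ereal ((1 - sgm) * cn / curv_term g H d))"

definition param_update :: "real \<Rightarrow> real \<Rightarrow> ereal \<Rightarrow> real" where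
  "param_update eps prev trial = (if ereal prev \<le> trial then prev else (1 - eps) * real_of_ereal trial)"

definition xi_trial :: "real \<Rightarrow> real^'n \<Rightarrow> real^'n^'n \<Rightarrow> real^'n \<Rightarrow> real \<Rightarrow> real" where
  "xi_trial tau g H d cn = delta_q tau g H d cn / (tau * (norm d)^2)"

definition proj_interval :: "real \<Rightarrow> real \<Rightarrow> real \<Rightarrow> real" where
  "proj_interval lo hi v = min hi (max lo v)"

definition step_size :: "real \<Rightarrow> real \<Rightarrow> real \<Rightarrow> real \<Rightarrow> real \<Rightarrow> real \<Rightarrow> real^'n \<Rightarrow> real^'n^'n \<Rightarrow> real^'n \<Rightarrow> real \<Rightarrow> real" where
  "step_size L Gam theta beta tau xi g H d cn =
     (let D = (tau * L + Gam) * (norm d)^2;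
          ahat = beta * delta_q tau g H d cn / D;
          atil = ahat - 4 * cn / D;
          a = beta * xi * tau / (tau * L + Gam);
          hi = a + theta * beta^2;
          alh = proj_interval a hi ahat;
          alt = proj_interval a hi atil
      in if alh < 1 then alh else if alt \<le> 1 then 1 else alt)"

text \<open>History sigma-algebra F_k generated by the stochastic gradients gbar_0, ..., gbar_{k-1}
  (conditioning on F_k = conditioning on the algorithm having reached x_k).\<close>
definition hist :: "'a measure \<Rightarrow> (nat \<Rightarrow> 'a \<Rightarrow> real^'n) \<Rightarrow> nat \<Rightarrow> 'a measure" where
  "hist M gbar k = sigma (space M) (\<Union>i<k. {gbar i -` A \<inter> space M | A. A \<in> sets borel})"

end

theory Submission
  imports Defs
begin

lemma vec_meas:
  fixes f :: "'a \<Rightarrow> 'b::euclidean_space ^ 'n"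
  assumes "\<And>i. (\<lambda>x. f x $ i) \<in> borel_measurable M"
  shows "f \<in> borel_measurable M"
proof (subst borel_measurable_euclidean_space, intro ballI)
  fix b :: "'b^'n" assume "b \<in> Basis"
  then obtain i u where u: "u \<in> Basis" "b = axis i u" unfolding Basis_vec_def by auto
  have "(\<lambda>x. f x \<bullet> b) = (\<lambda>x. (f x $ i) \<bullet> u)" using u by (simp add: inner_axis)
  then show "(\<lambda>x. f x \<bullet> b) \<in> borel_measurable M" using assms[of i] by simp
qed

lemma nth_meas[measurable (raw)]:
  fixes f :: "'a \<Rightarrow> 'b::euclidean_space ^ 'n"
  assumes "f \<in> borel_measurable M"
  shows "(\<lambda>x. f x $ i) \<in> borel_measurable M"
  by (rule borel_measurable_continuous_on[OF _ assms]) (intro continuous_intros)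

lemma mv_meas[measurable (raw)]:
  fixes A :: "'a \<Rightarrow> real^'n^'m" and v :: "'a \<Rightarrow> real^'n"
  assumes "A \<in> borel_measurable M" "v \<in> borel_measurable M"
  shows "(\<lambda>x. A x *v v x) \<in> borel_measurable M"
  proof (rule vec_meas)
  fix i show "(\<lambda>x. (A x *v v x) $ i) \<in> borel_measurable M"
    unfolding matrix_vector_mult_def vec_lambda_beta using assms by measurable
qed

lemma transp_meas[measurable (raw)]:
  fixes A :: "'a \<Rightarrow> real^'n^'m"
  assumes "A \<in> borel_measurable M"
  shows "(\<lambda>x. transpose (A x)) \<in> borel_measurable M"
  proof (intro vec_meas)
  fix i j show "(\<lambda>x. transpose (A x) $ i $ j) \<in> borel_measurable M"
    unfolding transpose_def vec_lambda_beta using assms by measurable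
qed

lemma det_meas[measurable (raw)]:
  fixes A :: "'a \<Rightarrow> real^'n^'n"
  assumes "A \<in> borel_measurable M"
  shows "(\<lambda>x. det (A x)) \<in> borel_measurable M"
  unfolding det_def using assms by measurable

lemma sum_UNIV_Plus:
  "sum f (UNIV::('a::finite + 'b::finite) set) = sum (\<lambda>i. f (Inl i)) UNIV + sum (\<lambda>j. f (Inr j)) UNIV"
  using sum.Plus[of "UNIV::'a set" "UNIV::'b set" f] by (simp add: comp_def)

definition kkt :: "real^'n^'n \<Rightarrow> real^'n^'m \<Rightarrow> real^('n::finite+'m::finite)^('n+'m)" where
  "kkt H J = (\<chi> a b. case a of Inl i \<Rightarrow> (case b of Inl j \<Rightarrow> H$i$j | Inr j \<Rightarrow> J$j$i)
                      | Inr i \<Rightarrow> (case b of Inl j \<Rightarrow> J$i$j | Inr j \<Rightarrow> 0))"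

definition krhs :: "real^'n \<Rightarrow> real^'m \<Rightarrow> real^('n::finite+'m::finite)" where
  "krhs g cv = (\<chi> a. case a of Inl i \<Rightarrow> - g$i | Inr i \<Rightarrow> - cv$i)"

definition zl :: "real^('n::finite+'m::finite) \<Rightarrow> real^'n" where "zl z = (\<chi> i. z $ Inl i)"
definition zr :: "real^('n::finite+'m::finite) \<Rightarrow> real^'m" where "zr z = (\<chi> i. z $ Inr i)"

lemma kkt_mult_Inl: "(kkt H J *v z) $ Inl i = (H *v zl z + transpose J *v zr z) $ i"
  by (simp add: kkt_def matrix_vector_mult_def sum_UNIV_Plus zl_def zr_def transpose_def)

lemma kkt_mult_Inr: "(kkt H J *v z) $ Inr i = (J *v zl z) $ i"
  by (simp add: kkt_def matrix_vector_mult_def sum_UNIV_Plus zl_def zr_def transpose_def)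

lemma kkt_eq_iff:
  "kkt H J *v z = krhs g cv \<longleftrightarrow> (H *v zl z + transpose J *v zr z = - g \<and> J *v zl z = - cv)"
proof -
  have "kkt H J *v z = krhs g cv \<longleftrightarrow> (\<forall>a. (kkt H J *v z) $ a = krhs g cv $ a)" by (simp add: vec_eq_iff)
  also have "\<dots> \<longleftrightarrow> (\<forall>i. (kkt H J *v z) $ Inl i = krhs g cv $ Inl i) \<and> (\<forall>i. (kkt H J *v z) $ Inr i = krhs g cv $ Inr i)"
    by (metis sum.exhaust)
  also have "\<dots> \<longleftrightarrow> (H *v zl z + transpose J *v zr z = - g \<and> J *v zl z = - cv)"
    by (simp add: kkt_mult_Inl kkt_mult_Inr krhs_def vec_eq_iff)
  finally show ?thesis .
qed

definition mkz :: "real^'n \<Rightarrow> real^'m \<Rightarrow> real^('n::finite+'m::finite)" where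
  "mkz d y = (\<chi> a. case a of Inl i \<Rightarrow> d$i | Inr i \<Rightarrow> y$i)"

lemma zl_mkz[simp]: "zl (mkz d y) = d" and zr_mkz[simp]: "zr (mkz d y) = y"
  by (simp_all add: zl_def zr_def mkz_def vec_eq_iff)

lemma z_eq: "z = mkz (zl z) (zr z)"
  by (simp add: vec_eq_iff mkz_def zl_def zr_def split: sum.split)

lemma kkt_det_nz:
  fixes H :: "real^'n^'n" and J :: "real^'n^'m"
  assumes inj: "\<forall>v. transpose J *v v = 0 \<longrightarrow> v = 0"
    and pd: "\<forall>u. J *v u = 0 \<longrightarrow> u \<noteq> 0 \<longrightarrow> 0 < u \<bullet> (H *v u)"
  shows "det (kkt H J) \<noteq> 0"
proof -
  have z0: "z = 0" if "kkt H J *v z = 0" for z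
  proof -
    have e: "kkt H J *v z = krhs 0 0" using that by (simp add: krhs_def vec_eq_iff split: sum.split)
    then have 1: "H *v zl z + transpose J *v zr z = 0" and 2: "J *v zl z = 0"
      unfolding kkt_eq_iff by auto
    have h: "H *v zl z = - (transpose J *v zr z)" using 1 by (simp add: eq_neg_iff_add_eq_0)
    have "zl z \<bullet> (H *v zl z) = - (zl z \<bullet> (transpose J *v zr z))"
      unfolding h by (rule inner_minus_right)
    also have "zl z \<bullet> (transpose J *v zr z) = (zr z v* J) \<bullet> zl z"
      unfolding transpose_matrix_vector by (rule inner_commute)
    also have "\<dots> = zr z \<bullet> (J *v zl z)" by (rule dot_lmul_matrix)
    finally have "zl z \<bullet> (H *v zl z) = 0" using 2 by simp
    then have "zl z = 0" using pd 2 by (metis less_irrefl)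
    then have "zr z = 0" using 1 inj by simp
    then show "z = 0" using \<open>zl z = 0\<close> z_eq[of z] by (simp add: mkz_def vec_eq_iff split: sum.split)
  qed
  have "inj ((*v) (kkt H J))"
  proof (rule injI)
    fix a b assume "kkt H J *v a = kkt H J *v b"
    then have "kkt H J *v (a - b) = 0" by (simp add: matrix_vector_mult_diff_distrib)
    then have "a - b = 0" by (rule z0)
    then show "a = b" by simp
  qed
  then show ?thesis using det_nz_iff_inj[of "(*v) (kkt H J)"]
    by (simp add: matrix_vector_mul_linear)
qed

definition crsol :: "real^'k^'k \<Rightarrow> real^'k \<Rightarrow> real^'k" where
  "crsol A b = (\<chi> k. det(\<chi> i j. if j=k then b$i else A$i$j) / det A)"

lemma sqp_dir_eq:
  fixes H :: "real^'n^'n" and J :: "real^'n^'m"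
  assumes inj: "\<forall>v. transpose J *v v = 0 \<longrightarrow> v = 0"
    and pd: "\<forall>u. J *v u = 0 \<longrightarrow> u \<noteq> 0 \<longrightarrow> 0 < u \<bullet> (H *v u)"
  shows "sqp_dir H J g cv = zl (crsol (kkt H J) (krhs g cv))"
proof -
  have dn: "det (kkt H J) \<noteq> 0" by (rule kkt_det_nz[OF inj pd])
  note cr = cramer[OF dn, folded crsol_def]
  let ?z = "crsol (kkt H J) (krhs g cv)"
  have sol: "kkt H J *v ?z = krhs g cv" using cr by simp
  show ?thesis unfolding sqp_dir_def
  proof (rule the_equality)
    show "\<exists>y. H *v zl ?z + transpose J *v y = - g \<and> J *v zl ?z = - cv"
      using sol unfolding kkt_eq_iff by blast
  next
    fix d assume "\<exists>y. H *v d + transpose J *v y = - g \<and> J *v d = - cv"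
    then obtain y where "H *v d + transpose J *v y = - g \<and> J *v d = - cv" by blast
    then have "kkt H J *v mkz d y = krhs g cv" unfolding kkt_eq_iff by simp
    then have "mkz d y = ?z" using cr by blast
    then show "d = zl ?z" by (metis zl_mkz)
  qed
qed

lemma crsol_meas[measurable (raw)]:
  fixes A :: "'a \<Rightarrow> real^'k^'k"
  assumes "A \<in> borel_measurable M" "b \<in> borel_measurable M"
  shows "(\<lambda>x. crsol (A x) (b x)) \<in> borel_measurable M"
proof (rule vec_meas)
  fix k
  have "(\<lambda>x. (\<chi> i j. if j=k then b x $i else A x $i$j)) \<in> borel_measurable M"
  proof (intro vec_meas)
    fix i j show "(\<lambda>x. (\<chi> i j. if j=k then b x $i else A x $i$j) $ i $ j) \<in> borel_measurable M"
      using assms by (cases "j = k") simp_all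
  qed
  then show "(\<lambda>x. crsol (A x) (b x) $ k) \<in> borel_measurable M"
    unfolding crsol_def vec_lambda_beta using assms by measurable
qed

lemma kkt_meas[measurable (raw)]:
  fixes H :: "'a \<Rightarrow> real^'n^'n" and J :: "'a \<Rightarrow> real^'n^'m"
  assumes "H \<in> borel_measurable M" "J \<in> borel_measurable M"
  shows "(\<lambda>x. kkt (H x) (J x)) \<in> borel_measurable M"
proof (intro vec_meas)
  fix a b show "(\<lambda>x. kkt (H x) (J x) $ a $ b) \<in> borel_measurable M"
    using assms by (cases a; cases b) (simp_all add: kkt_def)
qed

lemma krhs_meas[measurable (raw)]:
  fixes g :: "'a \<Rightarrow> real^'n" and cv :: "'a \<Rightarrow> real^'m"
  assumes "g \<in> borel_measurable M" "cv \<in> borel_measurable M"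
  shows "(\<lambda>x. krhs (g x) (cv x)) \<in> borel_measurable M"
proof (intro vec_meas)
  fix a show "(\<lambda>x. krhs (g x) (cv x) $ a) \<in> borel_measurable M"
    using assms by (cases a) (simp_all add: krhs_def)
qed

lemma zl_meas[measurable (raw)]:
  fixes z :: "'a \<Rightarrow> real^('n::finite+'m::finite)"
  assumes "z \<in> borel_measurable M"
  shows "(\<lambda>x. zl (z x) :: real^'n) \<in> borel_measurable M"
  by (intro vec_meas) (unfold zl_def vec_lambda_beta, use assms in measurable)

lemma sqp_meas:
  fixes H :: "'a \<Rightarrow> real^'n^'n" and J :: "'a \<Rightarrow> real^'n^'m"
  assumes "H \<in> borel_measurable M" "J \<in> borel_measurable M" "g \<in> borel_measurable M" "cv \<in> borel_measurable M"
    and inj: "\<forall>x\<in>space M. \<forall>v. transpose (J x) *v v = 0 \<longrightarrow> v = 0"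
    and pd: "\<forall>x\<in>space M. \<forall>u. J x *v u = 0 \<longrightarrow> u \<noteq> 0 \<longrightarrow> 0 < u \<bullet> (H x *v u)"
  shows "(\<lambda>x. sqp_dir (H x) (J x) (g x) (cv x)) \<in> borel_measurable M"
proof -
  have "(\<lambda>x. zl (crsol (kkt (H x) (J x)) (krhs (g x) (cv x)))) \<in> borel_measurable M"
    using assms(1-4) by measurable
  then show ?thesis
    by (rule measurable_cong[THEN iffD1, rotated]) (simp add: sqp_dir_eq inj pd)
qed

lemma cond_step:
  fixes Y :: "'a \<Rightarrow> ennreal"
  assumes M: "prob_space M" and sub: "subalgebra M F"
    and Y: "Y \<in> borel_measurable F" and Yfin: "(\<integral>\<^sup>+ x. Y x \<partial>M) < \<infinity>"
    and A: "A \<in> sets M"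
    and hyp: "AE x in M. ennreal q \<le> nn_cond_exp M F (indicator A) x"
    and q: "0 < q" "q < 1"
  shows "ennreal (1 / (1 - q)) * (\<integral>\<^sup>+ x. Y x * indicator (space M - A) x \<partial>M) \<le> (\<integral>\<^sup>+ x. Y x \<partial>M)"
proof -
  interpret prob_space M by (rule M)
  interpret finite_measure_subalgebra M F by unfold_locales (rule sub)
  have YM[measurable]: "Y \<in> borel_measurable M"
    using Y sub by (meson measurable_from_subalg)
  have [measurable]: "A \<in> sets M" by (rule A)
  define a where "a = (\<integral>\<^sup>+ x. Y x * indicator A x \<partial>M)"
  define b where "b = (\<integral>\<^sup>+ x. Y x * indicator (space M - A) x \<partial>M)"
  define s where "s = (\<integral>\<^sup>+ x. Y x \<partial>M)"
  have "s = (\<integral>\<^sup>+ x. Y x * indicator A x + Y x * indicator (space M - A) x \<partial>M)"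
    unfolding s_def by (rule nn_integral_cong) (auto simp: indicator_def)
  also have "\<dots> = a + b" unfolding a_def b_def by (rule nn_integral_add) auto
  finally have sab: "s = a + b" .
  have "a = (\<integral>\<^sup>+ x. Y x * nn_cond_exp M F (indicator A) x \<partial>M)"
    unfolding a_def by (rule nn_cond_exp_intg[symmetric]) (auto simp: Y)
  also have "\<dots> \<ge> (\<integral>\<^sup>+ x. Y x * ennreal q \<partial>M)"
    proof (rule nn_integral_mono_AE)
    show "AE x in M. Y x * ennreal q \<le> Y x * nn_cond_exp M F (indicator A) x"
      using hyp by eventually_elim (rule mult_left_mono, auto)
  qed
  finally have aq: "s * ennreal q \<le> a" unfolding s_def by (simp add: nn_integral_multc)
  have sfin: "s < \<infinity>" using Yfin s_def by simp
  then have afin: "a < \<infinity>" and bfin: "b < \<infinity>" using sab by (auto simp: top_unique)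
  obtain a' where a': "a = ennreal a'" "a' \<ge> 0" using afin by (cases a) auto
  obtain b' where b': "b = ennreal b'" "b' \<ge> 0" using bfin by (cases b) auto
  have e1: "ennreal ((a' + b') * q) = (ennreal a' + ennreal b') * ennreal q"
    using a' b' q by (simp add: ennreal_mult ennreal_plus)
  have "ennreal ((a' + b') * q) \<le> ennreal a'"
    unfolding e1 using aq unfolding sab a' b' .
  then have r: "(a' + b') * q \<le> a'" using a' by (simp add: ennreal_le_iff)
  have "1 / (1 - q) * b' \<le> a' + b'"
  proof -
    have "b' \<le> (1 - q) * (a' + b')" using r by (simp add: algebra_simps)
    then show ?thesis using q by (simp add: field_simps)
  qed
  then have "ennreal (1 / (1 - q) * b') \<le> ennreal (a' + b')" by (rule ennreal_leI)
  moreover have "ennreal (1 / (1 - q) * b') = ennreal (1 / (1 - q)) * b"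
    unfolding b'(1) by (rule ennreal_mult) (use q b' in auto)
  moreover have "ennreal (a' + b') = s" using sab a' b' by (simp add: ennreal_plus)
  ultimately show ?thesis unfolding s_def b_def by simp
qed

lemma bc_cond:
  fixes F :: "nat \<Rightarrow> 'a measure" and A B :: "nat \<Rightarrow> 'a set"
  assumes M: "prob_space M"
    and Fsp: "\<And>k. space (F k) = space M"
    and Fsub: "\<And>k. sets (F k) \<subseteq> sets M"
    and Fmono: "\<And>k N. k \<le> N \<Longrightarrow> sets (F k) \<subseteq> sets (F N)"
    and A: "\<And>k. A k \<in> sets (F (Suc k))"
    and B: "\<And>k. B k \<in> sets (F k)"
    and p: "0 < p"
    and hyp: "\<And>k. AE \<omega> in M. ennreal p \<le> nn_cond_exp M (F k) (indicator (A k)) \<omega>"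
  shows "\<exists>N0\<in>null_sets M. {\<omega>\<in>space M. (\<forall>k\<ge>n. \<not>(\<omega>\<in>A k \<and> \<omega>\<in>B k)) \<and> infinite {k. \<omega>\<in>B k}} \<subseteq> N0"
proof -
  interpret prob_space M by (rule M)
  define q where "q = min p (1/2)"
  have q: "0 < q" "q < 1" "q \<le> p" using p by (auto simp: q_def)
  define r where "r = 1 / (1 - q)"
  have r1: "r \<ge> 1" using q by (simp add: r_def field_simps)
  define R where "R = ennreal r"
  have subalg: "subalgebra M (F k)" for k using Fsp Fsub by (simp add: subalgebra_def)
  have hypq: "AE \<omega> in M. ennreal q \<le> nn_cond_exp M (F k) (indicator (A k)) \<omega>" for k
    using hyp[of k] by eventually_elim (rule order_trans[OF _], use q in \<open>auto simp: ennreal_leI\<close>)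
  have AM: "A k \<in> sets M" for k using A Fsub by blast
  have BM: "B k \<in> sets M" for k using B Fsub by blast
  have measF: "f \<in> borel_measurable (F N)" if "f \<in> borel_measurable (F k)" "k \<le> N" for f :: "'a \<Rightarrow> ennreal" and k N
    using that Fmono[of k N] Fsp by (auto simp: measurable_def)
  define fac where "fac k \<omega> = (if \<omega> \<in> B k then R * indicator (space M - A k) \<omega> else 1)" for k \<omega>
  define Z where "Z N \<omega> = (\<Prod>k\<in>{n..<N}. fac k \<omega>)" for N \<omega>
  have facm: "fac k \<in> borel_measurable (F N)" if "Suc k \<le> N" for k N
  proof -
    have [measurable]: "B k \<in> sets (F N)" using B Fmono[of k N] that by auto
    have [measurable]: "space M - A k \<in> sets (F N)" using A[of k] Fmono[of "Suc k" N] that Fsp[of N]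
      by (metis sets.Diff sets.top subsetD)
    show ?thesis unfolding fac_def by measurable
  qed
  have Zm: "Z N \<in> borel_measurable (F N)" for N
    unfolding Z_def by (rule borel_measurable_prod_ennreal) (auto intro!: facm)
  have ZmM[measurable]: "Z N \<in> borel_measurable M" for N
    using Zm subalg measurable_from_subalg by blast
  have Zint: "(\<integral>\<^sup>+ \<omega>. Z N \<omega> \<partial>M) \<le> 1" for N
  proof (induction N)
    case 0
    then show ?case by (simp add: Z_def emeasure_space_1)
  next
    case (Suc N)
    show ?case
    proof (cases "n \<le> N")
      case False
      then have "Z (Suc N) = (\<lambda>_. 1)" by (simp add: Z_def fun_eq_iff)
      then show ?thesis by (simp add: emeasure_space_1)
    next
      case True
      define Y where "Y \<omega> = Z N \<omega> * indicator (B N) \<omega>" for \<omega>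
      have [measurable]: "B N \<in> sets M" "A N \<in> sets M" using AM BM by auto
      have YF: "Y \<in> borel_measurable (F N)"
      proof -
        have [measurable]: "B N \<in> sets (F N)" by (rule B)
        show ?thesis unfolding Y_def using Zm[of N] by measurable
      qed
      have [measurable]: "Y \<in> borel_measurable M" unfolding Y_def by measurable
      have Yle: "(\<integral>\<^sup>+ \<omega>. Y \<omega> \<partial>M) \<le> (\<integral>\<^sup>+ \<omega>. Z N \<omega> \<partial>M)"
        unfolding Y_def by (rule nn_integral_mono) (auto simp: indicator_def)
      then have "(\<integral>\<^sup>+ \<omega>. Y \<omega> \<partial>M) \<le> 1" using Suc.IH by (rule order_trans)
      then have Yfin: "(\<integral>\<^sup>+ \<omega>. Y \<omega> \<partial>M) < \<infinity>"
        using ennreal_one_less_top unfolding infinity_ennreal_def by (rule le_less_trans)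
      have cs: "R * (\<integral>\<^sup>+ \<omega>. Y \<omega> * indicator (space M - A N) \<omega> \<partial>M) \<le> (\<integral>\<^sup>+ \<omega>. Y \<omega> \<partial>M)"
        unfolding R_def r_def by (rule cond_step[OF M subalg YF Yfin AM hypq q(1,2)])
      have "(\<integral>\<^sup>+ \<omega>. Z (Suc N) \<omega> \<partial>M) =
          (\<integral>\<^sup>+ \<omega>. Z N \<omega> * indicator (space M - B N) \<omega> + R * (Y \<omega> * indicator (space M - A N) \<omega>) \<partial>M)"
        by (rule nn_integral_cong)
           (use True in \<open>auto simp: Z_def Y_def fac_def prod.atLeastLessThan_Suc indicator_def mult.commute\<close>)
      also have "\<dots> = (\<integral>\<^sup>+ \<omega>. Z N \<omega> * indicator (space M - B N) \<omega> \<partial>M) +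
            R * (\<integral>\<^sup>+ \<omega>. Y \<omega> * indicator (space M - A N) \<omega> \<partial>M)"
        by (subst nn_integral_add) (auto simp: nn_integral_cmult)
      also have "\<dots> \<le> (\<integral>\<^sup>+ \<omega>. Z N \<omega> * indicator (space M - B N) \<omega> \<partial>M) + (\<integral>\<^sup>+ \<omega>. Y \<omega> \<partial>M)"
        using cs by (rule add_left_mono)
      also have "\<dots> = (\<integral>\<^sup>+ \<omega>. Z N \<omega> * indicator (space M - B N) \<omega> + Y \<omega> \<partial>M)"
        by (subst nn_integral_add) auto
      also have "\<dots> = (\<integral>\<^sup>+ \<omega>. Z N \<omega> \<partial>M)"
        by (rule nn_integral_cong) (auto simp: Y_def indicator_def)
      finally show ?thesis using Suc.IH by simp
    qed
  qed
  define cnt where "cnt N \<omega> = (\<Sum>k\<in>{n..<N}. indicator (B k) \<omega> :: real)" for N \<omega>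
  define W where "W m N = {\<omega>\<in>space M. (\<forall>k\<ge>n. \<not>(\<omega>\<in>A k \<and> \<omega>\<in>B k)) \<and> real m \<le> cnt N \<omega>}" for m N
  have Wm: "W m N \<in> sets M" for m N
  proof -
    have [measurable]: "A k \<in> sets M" "B k \<in> sets M" for k using AM BM by auto
    show ?thesis unfolding W_def cnt_def by measurable
  qed
  have cnt_mono: "cnt N \<omega> \<le> cnt N' \<omega>" if "N \<le> N'" for N N' \<omega>
    unfolding cnt_def by (rule sum_mono2) (use that in auto)
  have Winc: "incseq (W m)" for m
    unfolding incseq_def W_def using cnt_mono order_trans by fastforce
  have cnt_card: "cnt N \<omega> = real (card ({n..<N} \<inter> {k. \<omega> \<in> B k}))" for N \<omega>
  proof -
    have "cnt N \<omega> = (\<Sum>k\<in>{n..<N}. indicator {k. \<omega> \<in> B k} k)"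
      unfolding cnt_def by (rule sum.cong) (auto simp: indicator_def)
    also have "\<dots> = real (\<Sum>k\<in>{n..<N}. indicator {k. \<omega> \<in> B k} k :: nat)"
      unfolding of_nat_sum by (rule sum.cong) (auto simp: indicator_def)
    also have "\<dots> = real (card ({n..<N} \<inter> {k. \<omega> \<in> B k}))"
      by (subst sum_indicator_eq_card) auto
    finally show ?thesis .
  qed
  have Wbound: "emeasure M (W m N) \<le> ennreal ((1 - q) ^ m)" for m N
  proof -
    have "\<forall>\<omega>\<in>space M. ennreal (r ^ m) * indicator (W m N) \<omega> \<le> Z N \<omega>"
    proof
      fix \<omega> assume \<omega>: "\<omega> \<in> space M"
      show "ennreal (r ^ m) * indicator (W m N) \<omega> \<le> Z N \<omega>"
      proof (cases "\<omega> \<in> W m N")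
        case False then show ?thesis by simp
      next
        case True
        then have nAB: "\<forall>k\<ge>n. \<not>(\<omega>\<in>A k \<and> \<omega>\<in>B k)" and mc: "real m \<le> cnt N \<omega>"
          by (auto simp: W_def)
        have "Z N \<omega> = (\<Prod>k\<in>{n..<N}. if \<omega> \<in> B k then R else 1)"
          unfolding Z_def by (rule prod.cong) (use nAB \<omega> in \<open>auto simp: fac_def indicator_def\<close>)
        also have "\<dots> = R ^ card ({n..<N} \<inter> {k. \<omega> \<in> B k})"
          by (simp add: prod.If_cases)
        also have "\<dots> = ennreal (r ^ card ({n..<N} \<inter> {k. \<omega> \<in> B k}))"
          unfolding R_def using r1 by (simp add: ennreal_power)
        finally have zeq: "Z N \<omega> = ennreal (r ^ card ({n..<N} \<inter> {k. \<omega> \<in> B k}))" .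
        have "m \<le> card ({n..<N} \<inter> {k. \<omega> \<in> B k})" using mc cnt_card by simp
        then have "r ^ m \<le> r ^ card ({n..<N} \<inter> {k. \<omega> \<in> B k})" using r1 by (rule power_increasing)
        then show ?thesis using True zeq by (simp add: ennreal_leI)
      qed
    qed
    then have "(\<integral>\<^sup>+ \<omega>. ennreal (r ^ m) * indicator (W m N) \<omega> \<partial>M) \<le> (\<integral>\<^sup>+ \<omega>. Z N \<omega> \<partial>M)"
      by (intro nn_integral_mono) auto
    then have "ennreal (r ^ m) * emeasure M (W m N) \<le> 1"
      using Zint[of N] Wm by (simp add: nn_integral_cmult_indicator)
    then have "ennreal (r ^ m * measure M (W m N)) \<le> 1"
      using r1 by (simp add: emeasure_eq_measure ennreal_mult')
    then have "r ^ m * measure M (W m N) \<le> 1" by simp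
    then have "measure M (W m N) \<le> 1 / r ^ m" using r1 by (simp add: field_simps)
    also have "1 / r ^ m = (1 - q) ^ m" unfolding r_def by (simp add: power_divide)
    finally show ?thesis by (simp add: emeasure_eq_measure ennreal_leI)
  qed
  define N0 where "N0 = (\<Inter>m. \<Union>N. W m N)"
  have N0m: "N0 \<in> sets M" unfolding N0_def using Wm by auto
  have N0b: "measure M N0 \<le> (1 - q) ^ m" for m
  proof -
    have "emeasure M N0 \<le> emeasure M (\<Union>N. W m N)"
      unfolding N0_def by (rule emeasure_mono) (use Wm in auto)
    also have "\<dots> = (SUP N. emeasure M (W m N))"
      by (rule SUP_emeasure_incseq[symmetric]) (use Wm Winc in auto)
    also have "\<dots> \<le> ennreal ((1 - q) ^ m)" by (rule SUP_least) (rule Wbound)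
    finally show ?thesis using q by (simp add: emeasure_eq_measure ennreal_le_iff)
  qed
  have "measure M N0 \<le> 0"
  proof (rule tendsto_le[OF trivial_limit_sequentially])
    show "(\<lambda>m. (1 - q) ^ m) \<longlonglongrightarrow> 0" using q by (intro LIMSEQ_power_zero) auto
    show "(\<lambda>m. measure M N0) \<longlonglongrightarrow> measure M N0" by simp
    show "\<forall>\<^sub>F m in sequentially. measure M N0 \<le> (1 - q) ^ m" using N0b by simp
  qed
  then have "N0 \<in> null_sets M" using N0m by (simp add: emeasure_eq_measure null_sets_def measure_nonneg antisym)
  moreover have "{\<omega>\<in>space M. (\<forall>k\<ge>n. \<not>(\<omega>\<in>A k \<and> \<omega>\<in>B k)) \<and> infinite {k. \<omega>\<in>B k}} \<subseteq> N0"
  proof safe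
    fix \<omega> assume \<omega>: "\<omega> \<in> space M" and nAB: "\<forall>k\<ge>n. \<not>(\<omega>\<in>A k \<and> \<omega>\<in>B k)"
      and inf: "infinite {k. \<omega>\<in>B k}"
    show "\<omega> \<in> N0" unfolding N0_def
    proof
      fix m
      have "infinite ({k. \<omega>\<in>B k} - {..<n})" using inf by simp
      then obtain S where S: "finite S" "card S = m" "S \<subseteq> {k. \<omega>\<in>B k} - {..<n}"
        using infinite_arbitrarily_large by blast
      define N where "N = Suc (Max (insert n S))"
      have "S \<subseteq> {n..<N} \<inter> {k. \<omega> \<in> B k}"
        using S by (auto simp: N_def le_imp_less_Suc)
      then have "m \<le> card ({n..<N} \<inter> {k. \<omega> \<in> B k})" using S by (metis card_mono finite_Int finite_atLeastLessThan)
      then have "\<omega> \<in> W m N" using \<omega> nAB by (simp add: W_def cnt_card)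
      then show "\<omega> \<in> (\<Union>N. W m N)" by blast
    qed
  qed
  ultimately show ?thesis by blast
qed

lemma pu_le:
  assumes "0 < eps" "eps < 1" "0 < sgm" "sgm < 1" "cn \<ge> 0"
  shows "param_update eps prev (tau_trial sgm cn g H d) \<le> prev"
proof (cases "curv_term g H d \<le> 0")
  case True then show ?thesis by (simp add: param_update_def tau_trial_def)
next
  case False
  define t where "t = (1 - sgm) * cn / curv_term g H d"
  have t0: "t \<ge> 0" using False assms unfolding t_def by simp
  have T: "tau_trial sgm cn g H d = ereal t" using False by (simp add: tau_trial_def t_def)
  show ?thesis
  proof (cases "ereal prev \<le> ereal t")
    case True then show ?thesis by (simp add: param_update_def T)
  next
    case False
    then have "t < prev" by simp
    moreover have "(1 - eps) * t \<le> t" using t0 assms by (simp add: mult_left_le_one_le)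
    ultimately show ?thesis using False by (simp add: param_update_def T)
  qed
qed

lemma pu_lt:
  assumes "0 < eps" "eps < 1" "0 < sgm" "sgm < 1" "cn \<ge> 0"
    and big: "ereal prev > tau_trial sgm cn gd H dd"
    and cv: "curv_term gb H db \<ge> curv_term gd H dd"
  shows "param_update eps prev (tau_trial sgm cn gb H db) < prev"
proof -
  have pos: "curv_term gd H dd > 0"
    using big by (auto simp: tau_trial_def split: if_splits)
  define td where "td = (1 - sgm) * cn / curv_term gd H dd"
  have Td: "tau_trial sgm cn gd H dd = ereal td" using pos by (simp add: tau_trial_def td_def)
  have posb: "curv_term gb H db > 0" using pos cv by simp
  define tb where "tb = (1 - sgm) * cn / curv_term gb H db"
  have Tb: "tau_trial sgm cn gb H db = ereal tb" using posb by (simp add: tau_trial_def tb_def)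
  have tb0: "tb \<ge> 0" using posb assms unfolding tb_def by simp
  have "tb \<le> td" unfolding tb_def td_def
    by (rule divide_left_mono) (use assms pos cv in auto)
  moreover have "td < prev" using big Td by simp
  ultimately have lt: "tb < prev" by simp
  have "(1 - eps) * tb \<le> tb" using tb0 assms by (simp add: mult_left_le_one_le)
  then show ?thesis using lt by (simp add: param_update_def Tb)
qed

lemma hist_space[simp]: "space (hist M gbar k) = space M"
  unfolding hist_def by (rule space_measure_of) auto

lemma hist_sets: "sets (hist M gbar k) = sigma_sets (space M) (\<Union>i<k. {gbar i -` A \<inter> space M | A. A \<in> sets borel})"
  unfolding hist_def by (rule sets_measure_of) auto

lemma hist_sub:
  assumes "\<forall>i. gbar i \<in> borel_measurable M"
  shows "sets (hist M gbar k) \<subseteq> sets M"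
  unfolding hist_sets
proof (rule sets.sigma_sets_subset)
  show "(\<Union>i<k. {gbar i -` A \<inter> space M | A. A \<in> sets borel}) \<subseteq> sets M"
    using assms by (auto intro: measurable_sets)
qed

lemma hist_mono:
  assumes "k \<le> N" shows "sets (hist M gbar k) \<subseteq> sets (hist M gbar N)"
  unfolding hist_sets
  by (rule sigma_sets_mono', rule UN_mono) (use assms in auto)

lemma gbar_hist: "i < k \<Longrightarrow> gbar i \<in> borel_measurable (hist M gbar k)"
  unfolding measurable_def hist_space
  by (auto simp: hist_sets intro!: sigma_sets.Basic)

lemma meas_hist_mono:
  assumes "f \<in> borel_measurable (hist M gbar k)" "k \<le> N"
  shows "f \<in> borel_measurable (hist M gbar N)"
  using assms hist_mono[OF assms(2), of M gbar] by (auto simp: measurable_def)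

lemma l1norm_meas[measurable (raw)]:
  assumes [measurable]: "f \<in> borel_measurable M"
  shows "(\<lambda>x. l1norm (f x)) \<in> borel_measurable M"
  unfolding l1norm_def by measurable

lemma curv_meas[measurable (raw)]:
  assumes [measurable]: "g \<in> borel_measurable M" "H \<in> borel_measurable M" "d \<in> borel_measurable M"
  shows "(\<lambda>x. curv_term (g x) (H x) (d x)) \<in> borel_measurable M"
  unfolding curv_term_def by measurable

lemma tau_trial_meas[measurable (raw)]:
  assumes [measurable]: "cn \<in> borel_measurable M" "g \<in> borel_measurable M" "H \<in> borel_measurable M" "d \<in> borel_measurable M"
  shows "(\<lambda>x. tau_trial sgm (cn x) (g x) (H x) (d x)) \<in> borel_measurable M"
  unfolding tau_trial_def by measurable

lemma pu_meas[measurable (raw)]: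
  assumes [measurable]: "a \<in> borel_measurable M" "t \<in> borel_measurable M"
  shows "(\<lambda>x. param_update eps (a x) (t x)) \<in> borel_measurable M"
  unfolding param_update_def by measurable

lemma xi_trial_meas[measurable (raw)]:
  assumes [measurable]: "tau \<in> borel_measurable M" "cn \<in> borel_measurable M" "g \<in> borel_measurable M" "H \<in> borel_measurable M" "d \<in> borel_measurable M"
  shows "(\<lambda>x. xi_trial (tau x) (g x) (H x) (d x) (cn x)) \<in> borel_measurable M"
  unfolding xi_trial_def delta_q_def by measurable

lemma step_meas[measurable (raw)]:
  assumes [measurable]: "tau \<in> borel_measurable M" "xi \<in> borel_measurable M" "cn \<in> borel_measurable M" "g \<in> borel_measurable M" "H \<in> borel_measurable M" "d \<in> borel_measurable M"
  shows "(\<lambda>x. step_size L Gam theta beta (tau x) (xi x) (g x) (H x) (d x) (cn x)) \<in> borel_measurable M"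
  unfolding step_size_def delta_q_def proj_interval_def Let_def by measurable

lemma comp_X_meas:
  fixes phi :: "'b::real_normed_vector \<Rightarrow> 'c::real_normed_vector"
  assumes X: "open X" and phi: "continuous_on X phi" and x: "x \<in> borel_measurable N"
    and xX: "\<forall>\<omega>\<in>space N. x \<omega> \<in> X"
  shows "(\<lambda>\<omega>. phi (x \<omega>)) \<in> borel_measurable N"
proof -
  have "(\<lambda>z. indicator X z *\<^sub>R phi z) \<in> borel_measurable borel"
    using X phi by (intro borel_measurable_continuous_on_indicator) auto
  then have "(\<lambda>\<omega>. indicator X (x \<omega>) *\<^sub>R phi (x \<omega>)) \<in> borel_measurable N"
    using x by (rule measurable_compose[rotated])
  then show ?thesis
    by (rule measurable_cong[THEN iffD1, rotated]) (use xX in auto)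
qed

lemma Jc_cont:
  fixes Jc :: "real^'n \<Rightarrow> real^'n^'m"
  assumes gam_nonneg: "\<forall>i. gam i \<ge> 0"
    and J_lip: "\<forall>i. \<forall>y\<in>X. \<forall>z\<in>X. norm (Jc y $ i - Jc z $ i) \<le> gam i * norm (y - z)"
  shows "continuous_on X Jc"
proof (rule lipschitz_on_continuous_on, rule lipschitz_onI)
  show "0 \<le> (\<Sum>i\<in>UNIV. gam i)" using gam_nonneg by (simp add: sum_nonneg)
  fix y z assume yz: "y \<in> X" "z \<in> X"
  have "dist (Jc y) (Jc z) = L2_set (\<lambda>i. norm ((Jc y - Jc z) $ i)) UNIV"
    by (simp add: dist_norm norm_vec_def)
  also have "\<dots> \<le> (\<Sum>i\<in>UNIV. norm ((Jc y - Jc z) $ i))" by (rule L2_set_le_sum) auto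
  also have "\<dots> \<le> (\<Sum>i\<in>UNIV. gam i * norm (y - z))"
    by (rule sum_mono) (use J_lip yz in auto)
  also have "\<dots> = (\<Sum>i\<in>UNIV. gam i) * dist y z" by (simp add: sum_distrib_right dist_norm)
  finally show "dist (Jc y) (Jc z) \<le> (\<Sum>i\<in>UNIV. gam i) * dist y z" .
qed

lemma meas_hist_Suc:
  "f \<in> borel_measurable (hist M gbar k) \<Longrightarrow> f \<in> borel_measurable (hist M gbar (Suc k))"
  by (erule meas_hist_mono) simp

lemma meas_eqI:
  assumes "g \<in> borel_measurable N" "\<And>w. w \<in> space N \<Longrightarrow> f w = g w"
  shows "f \<in> borel_measurable N"
  using assms measurable_cong[of N f g] by simp

theorem proposition3p15:
  fixes M :: "'a measure"
    and f :: "real^'n \<Rightarrow> real" and gradf :: "real^'n \<Rightarrow> real^'n"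
    and c :: "real^'n \<Rightarrow> real^'m" and Jc :: "real^'n \<Rightarrow> real^'n^'m"
    and X :: "(real^'n) set" and L :: real and gam :: "'m \<Rightarrow> real"
    and H :: "nat \<Rightarrow> 'a \<Rightarrow> real^'n^'n" and kappaH zeta :: real
    and gbar :: "nat \<Rightarrow> 'a \<Rightarrow> real^'n" and Mvar :: real
    and x dbar d :: "nat \<Rightarrow> 'a \<Rightarrow> real^'n" and taubar xibar :: "nat \<Rightarrow> 'a \<Rightarrow> real"
    and x0 :: "real^'n" and tau_init eps sgm xi_init theta p :: real
    and beta :: "nat \<Rightarrow> real"
  assumes M: "prob_space M"
    \<comment> \<open>Standing Assumption\<close>
    and X_open: "open X" and X_convex: "convex X"
    and iter_in_X: "\<forall>k. \<forall>\<omega>\<in>space M. x k \<omega> \<in> X"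
    and f_deriv: "\<forall>z\<in>X. (f has_derivative (\<lambda>h. gradf z \<bullet> h)) (at z)"
    and f_cont_grad: "continuous_on X gradf"
    and f_bdd_below: "\<exists>lb. \<forall>z\<in>X. lb \<le> f z"
    and grad_bdd: "bounded (gradf ` X)"
    and L_pos: "L > 0"
    and grad_lip: "\<forall>y\<in>X. \<forall>z\<in>X. norm (gradf y - gradf z) \<le> L * norm (y - z)"
    and c_deriv: "\<forall>z\<in>X. (c has_derivative (\<lambda>h. Jc z *v h)) (at z)"
    and c_bdd: "bounded (c ` X)" and J_bdd: "bounded (Jc ` X)"
    and gam_nonneg: "\<forall>i. gam i \<ge> 0"
    and J_lip: "\<forall>i. \<forall>y\<in>X. \<forall>z\<in>X. norm (Jc y $ i - Jc z $ i) \<le> gam i * norm (y - z)"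
    and J_sing: "\<exists>s>0. \<forall>z\<in>X. \<forall>v. s * norm v \<le> norm (transpose (Jc z) *v v)"
    \<comment> \<open>Matrix Assumption\<close>
    and H_meas: "\<forall>k. H k \<in> borel_measurable (hist M gbar k)"
    and H_sym: "\<forall>k. \<forall>\<omega>\<in>space M. transpose (H k \<omega>) = H k \<omega>"
    and H_bdd: "\<forall>k. \<forall>\<omega>\<in>space M. onorm (\<lambda>v. H k \<omega> *v v) \<le> kappaH"
    and zeta_pos: "zeta > 0"
    and H_pd: "\<forall>k. \<forall>\<omega>\<in>space M. \<forall>u. Jc (x k \<omega>) *v u = 0 \<longrightarrow> zeta * (norm u)^2 \<le> u \<bullet> (H k \<omega> *v u)"
    \<comment> \<open>Algorithm 3 parameters\<close>
    and tau_init_pos: "tau_init > 0" and eps: "0 < eps" "eps < 1"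
    and sgm: "0 < sgm" "sgm < 1" and xi_init_pos: "xi_init > 0"
    and beta: "\<forall>k. 0 < beta k \<and> beta k \<le> 1" and theta: "theta \<ge> 0"
    \<comment> \<open>Algorithm 3 iteration (pathwise)\<close>
    and x_init: "\<forall>\<omega>\<in>space M. x 0 \<omega> = x0"
    and dbar_def: "\<forall>k. \<forall>\<omega>\<in>space M. dbar k \<omega> = sqp_dir (H k \<omega>) (Jc (x k \<omega>)) (gbar k \<omega>) (c (x k \<omega>))"
    and dbar_nz: "\<forall>k. \<forall>\<omega>\<in>space M. dbar k \<omega> \<noteq> 0"
    and taubar_def: "\<forall>k. \<forall>\<omega>\<in>space M. taubar k \<omega> =
        param_update eps (if k = 0 then tau_init else taubar (k - 1) \<omega>)
          (tau_trial sgm (l1norm (c (x k \<omega>))) (gbar k \<omega>) (H k \<omega>) (dbar k \<omega>))"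
    and xibar_def: "\<forall>k. \<forall>\<omega>\<in>space M. xibar k \<omega> =
        param_update eps (if k = 0 then xi_init else xibar (k - 1) \<omega>)
          (ereal (xi_trial (taubar k \<omega>) (gbar k \<omega>) (H k \<omega>) (dbar k \<omega>) (l1norm (c (x k \<omega>)))))"
    and x_step: "\<forall>k. \<forall>\<omega>\<in>space M. x (Suc k) \<omega> = x k \<omega> +
        step_size L (\<Sum>i\<in>UNIV. gam i) theta (beta k) (taubar k \<omega>) (xibar k \<omega>)
          (gbar k \<omega>) (H k \<omega>) (dbar k \<omega>) (l1norm (c (x k \<omega>))) *\<^sub>R dbar k \<omega>"
    \<comment> \<open>deterministic counterpart\<close>
    and d_def: "\<forall>k. \<forall>\<omega>\<in>space M. d k \<omega> = sqp_dir (H k \<omega>) (Jc (x k \<omega>)) (gradf (x k \<omega>)) (c (x k \<omega>))"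
    \<comment> \<open>Gradient Assumption\<close>
    and gbar_meas: "\<forall>k. gbar k \<in> borel_measurable M"
    and gbar_int: "\<forall>k i. integrable M (\<lambda>\<omega>. gbar k \<omega> $ i)"
    and unbiased: "\<forall>k i. AE \<omega> in M. real_cond_exp M (hist M gbar k) (\<lambda>\<omega>. gbar k \<omega> $ i) \<omega> = gradf (x k \<omega>) $ i"
    and variance: "\<forall>k. AE \<omega> in M.
        nn_cond_exp M (hist M gbar k) (\<lambda>\<omega>. ennreal ((norm (gbar k \<omega> - gradf (x k \<omega>)))^2)) \<omega> \<le> ennreal Mvar"
    \<comment> \<open>hypothesis of the proposition\<close>
    and p: "0 < p" "p \<le> 1"
    and prob_hyp: "\<forall>k. AE \<omega> in M. ennreal p \<le>
        nn_cond_exp M (hist M gbar k)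
          (indicator {\<omega>\<in>space M. curv_term (gbar k \<omega>) (H k \<omega>) (dbar k \<omega>)
                                   \<ge> curv_term (gradf (x k \<omega>)) (H k \<omega>) (d k \<omega>)}) \<omega>"
  shows "AE \<omega> in M. \<not> (\<exists>K::nat set. infinite K \<and> (\<exists>tbig>0. \<forall>k\<in>K.
            taubar k \<omega> = tbig
          \<and> ereal tbig > tau_trial sgm (l1norm (c (x k \<omega>))) (gradf (x k \<omega>)) (H k \<omega>) (d k \<omega>)
          \<and> xibar k \<omega> = lim (\<lambda>j. xibar j \<omega>)))"
proof -
  interpret prob_space M by (rule M)
  define F where "F k = hist M gbar k" for k
  have Fsp: "space (F k) = space M" for k by (simp add: F_def)
  have Fsub: "sets (F k) \<subseteq> sets M" for k unfolding F_def by (rule hist_sub[OF gbar_meas])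
  have Fmono: "k \<le> N \<Longrightarrow> sets (F k) \<subseteq> sets (F N)" for k N unfolding F_def by (rule hist_mono)
  have c_cont: "continuous_on X c"
    by (rule has_derivative_continuous_on) (use c_deriv in \<open>auto intro: has_derivative_at_withinI\<close>)
  have J_cont: "continuous_on X Jc" by (rule Jc_cont[OF gam_nonneg J_lip])
  obtain s where s: "s > 0" "\<forall>z\<in>X. \<forall>v. s * norm v \<le> norm (transpose (Jc z) *v v)"
    using J_sing by blast
  have injJ: "\<forall>\<omega>\<in>space M. \<forall>v. transpose (Jc (x k \<omega>)) *v v = 0 \<longrightarrow> v = 0" for k
  proof (intro ballI allI impI)
    fix \<omega> v assume \<omega>: "\<omega> \<in> space M" and v: "transpose (Jc (x k \<omega>)) *v v = 0"
    have "s * norm v \<le> norm (transpose (Jc (x k \<omega>)) *v v)" using s(2) iter_in_X \<omega> by blast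
    then have "s * norm v \<le> 0" using v by simp
    then show "v = 0" using s(1) by (simp add: mult_le_0_iff)
  qed
  have pdH: "\<forall>\<omega>\<in>space M. \<forall>u. Jc (x k \<omega>) *v u = 0 \<longrightarrow> u \<noteq> 0 \<longrightarrow> 0 < u \<bullet> (H k \<omega> *v u)" for k
  proof (intro ballI allI impI)
    fix \<omega> u assume \<omega>: "\<omega> \<in> space M" and u: "Jc (x k \<omega>) *v u = 0" "u \<noteq> 0"
    have "zeta * (norm u)^2 \<le> u \<bullet> (H k \<omega> *v u)" using H_pd \<omega> u by blast
    moreover have "zeta * (norm u)^2 > 0" using zeta_pos u by simp
    ultimately show "0 < u \<bullet> (H k \<omega> *v u)" by linarith
  qed
  define pt where "pt k \<omega> = (if k = 0 then tau_init else taubar (k - 1) \<omega>)" for k \<omega>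
  define px where "px k \<omega> = (if k = 0 then xi_init else xibar (k - 1) \<omega>)" for k \<omega>
  have Hm: "H k \<in> borel_measurable (F k)" for k using H_meas by (simp add: F_def)
  have gm: "gbar k \<in> borel_measurable (F (Suc k))" for k unfolding F_def by (rule gbar_hist) simp
  have xX: "\<forall>\<omega>\<in>space (F N). x k \<omega> \<in> X" for k N using iter_in_X Fsp by simp
  have compm: "(\<lambda>\<omega>. c (x k \<omega>)) \<in> borel_measurable (F N) \<and> (\<lambda>\<omega>. Jc (x k \<omega>)) \<in> borel_measurable (F N)
      \<and> (\<lambda>\<omega>. gradf (x k \<omega>)) \<in> borel_measurable (F N)"
    if "x k \<in> borel_measurable (F N)" for k N
    using comp_X_meas[OF X_open c_cont that xX] comp_X_meas[OF X_open J_cont that xX]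
      comp_X_meas[OF X_open f_cont_grad that xX] by blast
  have meas: "x k \<in> borel_measurable (F k) \<and> pt k \<in> borel_measurable (F k) \<and> px k \<in> borel_measurable (F k)" for k
  proof (induction k)
    case 0
    have "x 0 \<in> borel_measurable (F 0)"
      by (rule meas_eqI[where g="\<lambda>_. x0"]) (use x_init Fsp in auto)
    moreover have "pt 0 = (\<lambda>_. tau_init)" "px 0 = (\<lambda>_. xi_init)" by (auto simp: pt_def px_def fun_eq_iff)
    then have "pt 0 \<in> borel_measurable (F 0)" "px 0 \<in> borel_measurable (F 0)" by simp_all
    ultimately show ?case by blast
  next
    case (Suc k)
    have [measurable]: "x k \<in> borel_measurable (F (Suc k))" "pt k \<in> borel_measurable (F (Suc k))"
      "px k \<in> borel_measurable (F (Suc k))" "H k \<in> borel_measurable (F (Suc k))"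
      "gbar k \<in> borel_measurable (F (Suc k))"
      using Suc.IH Hm[of k] gm unfolding F_def by (auto intro: meas_hist_Suc)
    note cm = compm[of k "Suc k"]
    have [measurable]: "(\<lambda>\<omega>. c (x k \<omega>)) \<in> borel_measurable (F (Suc k))"
      "(\<lambda>\<omega>. Jc (x k \<omega>)) \<in> borel_measurable (F (Suc k))" using cm by auto
    have [measurable]: "dbar k \<in> borel_measurable (F (Suc k))"
    proof (rule meas_eqI)
      show "(\<lambda>\<omega>. sqp_dir (H k \<omega>) (Jc (x k \<omega>)) (gbar k \<omega>) (c (x k \<omega>))) \<in> borel_measurable (F (Suc k))"
        by (rule sqp_meas) (use injJ pdH Fsp in auto)
      show "dbar k w = sqp_dir (H k w) (Jc (x k w)) (gbar k w) (c (x k w))" if "w \<in> space (F (Suc k))" for w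
        using dbar_def that Fsp by auto
    qed
    have tm[measurable]: "taubar k \<in> borel_measurable (F (Suc k))"
    proof (rule meas_eqI)
      show "(\<lambda>\<omega>. param_update eps (pt k \<omega>)
          (tau_trial sgm (l1norm (c (x k \<omega>))) (gbar k \<omega>) (H k \<omega>) (dbar k \<omega>))) \<in> borel_measurable (F (Suc k))"
        by measurable
      show "taubar k w = param_update eps (pt k w)
          (tau_trial sgm (l1norm (c (x k w))) (gbar k w) (H k w) (dbar k w))" if "w \<in> space (F (Suc k))" for w
        using taubar_def that Fsp by (simp add: pt_def)
    qed
    have xm[measurable]: "xibar k \<in> borel_measurable (F (Suc k))"
    proof (rule meas_eqI)
      show "(\<lambda>\<omega>. param_update eps (px k \<omega>)
          (ereal (xi_trial (taubar k \<omega>) (gbar k \<omega>) (H k \<omega>) (dbar k \<omega>) (l1norm (c (x k \<omega>)))))) \<in> borel_measurable (F (Suc k))"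
        by measurable
      show "xibar k w = param_update eps (px k w)
          (ereal (xi_trial (taubar k w) (gbar k w) (H k w) (dbar k w) (l1norm (c (x k w)))))" if "w \<in> space (F (Suc k))" for w
        using xibar_def that Fsp by (simp add: px_def)
    qed
    have "x (Suc k) \<in> borel_measurable (F (Suc k))"
    proof (rule meas_eqI)
      show "(\<lambda>\<omega>. x k \<omega> + step_size L (\<Sum>i\<in>UNIV. gam i) theta (beta k) (taubar k \<omega>) (xibar k \<omega>)
          (gbar k \<omega>) (H k \<omega>) (dbar k \<omega>) (l1norm (c (x k \<omega>))) *\<^sub>R dbar k \<omega>) \<in> borel_measurable (F (Suc k))"
        by measurable
      show "x (Suc k) w = x k w + step_size L (\<Sum>i\<in>UNIV. gam i) theta (beta k) (taubar k w) (xibar k w)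
          (gbar k w) (H k w) (dbar k w) (l1norm (c (x k w))) *\<^sub>R dbar k w" if "w \<in> space (F (Suc k))" for w
        using x_step that Fsp by auto
    qed
    moreover have "pt (Suc k) = taubar k" "px (Suc k) = xibar k" by (auto simp: pt_def px_def fun_eq_iff)
    ultimately show ?case using tm xm by simp
  qed
  have dm: "d k \<in> borel_measurable (F k)" for k
  proof (rule meas_eqI)
    have [measurable]: "x k \<in> borel_measurable (F k)" "H k \<in> borel_measurable (F k)"
      using meas Hm by auto
    note cm = compm[of k k]
    have [measurable]: "(\<lambda>\<omega>. c (x k \<omega>)) \<in> borel_measurable (F k)"
      "(\<lambda>\<omega>. Jc (x k \<omega>)) \<in> borel_measurable (F k)" "(\<lambda>\<omega>. gradf (x k \<omega>)) \<in> borel_measurable (F k)"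
      using cm by auto
    show "(\<lambda>\<omega>. sqp_dir (H k \<omega>) (Jc (x k \<omega>)) (gradf (x k \<omega>)) (c (x k \<omega>))) \<in> borel_measurable (F k)"
      by (rule sqp_meas) (use injJ pdH Fsp in auto)
    show "d k w = sqp_dir (H k w) (Jc (x k w)) (gradf (x k w)) (c (x k w))" if "w \<in> space (F k)" for w
      using d_def that Fsp by auto
  qed
  define A where "A k = {\<omega>\<in>space M. curv_term (gbar k \<omega>) (H k \<omega>) (dbar k \<omega>)
                                   \<ge> curv_term (gradf (x k \<omega>)) (H k \<omega>) (d k \<omega>)}" for k
  define B where "B k = {\<omega>\<in>space M. ereal (pt k \<omega>) >
      tau_trial sgm (l1norm (c (x k \<omega>))) (gradf (x k \<omega>)) (H k \<omega>) (d k \<omega>)}" for k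
  have Am: "A k \<in> sets (F (Suc k))" for k
  proof -
    have [measurable]: "x k \<in> borel_measurable (F (Suc k))" "H k \<in> borel_measurable (F (Suc k))"
      "gbar k \<in> borel_measurable (F (Suc k))" "d k \<in> borel_measurable (F (Suc k))"
      using meas[of k] Hm[of k] gm dm[of k] unfolding F_def by (auto intro: meas_hist_Suc)
    have [measurable]: "(\<lambda>\<omega>. c (x k \<omega>)) \<in> borel_measurable (F (Suc k))"
      "(\<lambda>\<omega>. Jc (x k \<omega>)) \<in> borel_measurable (F (Suc k))" "(\<lambda>\<omega>. gradf (x k \<omega>)) \<in> borel_measurable (F (Suc k))"
      using compm[of k "Suc k"] by auto
    have [measurable]: "dbar k \<in> borel_measurable (F (Suc k))"
    proof (rule meas_eqI)
      show "(\<lambda>\<omega>. sqp_dir (H k \<omega>) (Jc (x k \<omega>)) (gbar k \<omega>) (c (x k \<omega>))) \<in> borel_measurable (F (Suc k))"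
        by (rule sqp_meas) (use injJ pdH Fsp in auto)
      show "dbar k w = sqp_dir (H k w) (Jc (x k w)) (gbar k w) (c (x k w))" if "w \<in> space (F (Suc k))" for w
        using dbar_def that Fsp by auto
    qed
    have "{\<omega>\<in>space (F (Suc k)). curv_term (gbar k \<omega>) (H k \<omega>) (dbar k \<omega>)
                                   \<ge> curv_term (gradf (x k \<omega>)) (H k \<omega>) (d k \<omega>)} \<in> sets (F (Suc k))"
      by measurable
    then show ?thesis by (simp add: A_def Fsp)
  qed
  have Bm: "B k \<in> sets (F k)" for k
  proof -
    have [measurable]: "x k \<in> borel_measurable (F k)" "H k \<in> borel_measurable (F k)"
      "pt k \<in> borel_measurable (F k)" "d k \<in> borel_measurable (F k)"
      using meas Hm dm by auto
    have [measurable]: "(\<lambda>\<omega>. c (x k \<omega>)) \<in> borel_measurable (F k)"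
      "(\<lambda>\<omega>. gradf (x k \<omega>)) \<in> borel_measurable (F k)"
      using compm[of k k] by auto
    have "{\<omega>\<in>space (F k). ereal (pt k \<omega>) >
      tau_trial sgm (l1norm (c (x k \<omega>))) (gradf (x k \<omega>)) (H k \<omega>) (d k \<omega>)} \<in> sets (F k)"
      by measurable
    then show ?thesis by (simp add: B_def Fsp)
  qed
  have hypA: "AE \<omega> in M. ennreal p \<le> nn_cond_exp M (F k) (indicator (A k)) \<omega>" for k
    using prob_hyp unfolding A_def F_def by blast
  define G where "G n = {\<omega>\<in>space M. (\<forall>k\<ge>n. \<not>(\<omega>\<in>A k \<and> \<omega>\<in>B k)) \<and> infinite {k. \<omega>\<in>B k}}" for n
  have ex: "\<forall>n. \<exists>N. N \<in> null_sets M \<and> G n \<subseteq> N"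
  proof
    fix n
    have "\<exists>N0\<in>null_sets M. G n \<subseteq> N0" unfolding G_def
      by (rule bc_cond[where M=M and F=F and A=A and B=B and p=p, OF M Fsp Fsub Fmono Am Bm p(1) hypA])
    then show "\<exists>N. N \<in> null_sets M \<and> G n \<subseteq> N" by (simp add: Bex_def)
  qed
  from choice[OF ex] obtain N0 where N0all: "\<forall>n. N0 n \<in> null_sets M \<and> G n \<subseteq> N0 n" by blast
  have N0: "\<And>n. N0 n \<in> null_sets M" "\<And>n. G n \<subseteq> N0 n" using N0all by auto
  have cn0: "l1norm v \<ge> 0" for v :: "real^'m" unfolding l1norm_def by (simp add: sum_nonneg)
  have tdec: "taubar (Suc j) \<omega> \<le> taubar j \<omega>" if "\<omega> \<in> space M" for j \<omega>
  proof -
    have "taubar (Suc j) \<omega> = param_update eps (taubar j \<omega>)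
          (tau_trial sgm (l1norm (c (x (Suc j) \<omega>))) (gbar (Suc j) \<omega>) (H (Suc j) \<omega>) (dbar (Suc j) \<omega>))"
      using taubar_def[THEN spec, of "Suc j", THEN bspec, OF that] by simp
    then show ?thesis using pu_le[OF eps sgm cn0] by simp
  qed
  show ?thesis
  proof (rule AE_I'[where N="\<Union>n. N0 n"])
    show "(\<Union>n. N0 n) \<in> null_sets M" using N0(1) by (rule null_sets_UN)
    show "{\<omega> \<in> space M. \<not> \<not> (\<exists>K::nat set. infinite K \<and> (\<exists>tbig>0. \<forall>k\<in>K.
            taubar k \<omega> = tbig
          \<and> ereal tbig > tau_trial sgm (l1norm (c (x k \<omega>))) (gradf (x k \<omega>)) (H k \<omega>) (d k \<omega>)
          \<and> xibar k \<omega> = lim (\<lambda>j. xibar j \<omega>)))} \<subseteq> (\<Union>n. N0 n)"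
    proof (rule subsetI)
      fix \<omega> assume "\<omega> \<in> {\<omega> \<in> space M. \<not> \<not> (\<exists>K::nat set. infinite K \<and> (\<exists>tbig>0. \<forall>k\<in>K.
            taubar k \<omega> = tbig
          \<and> ereal tbig > tau_trial sgm (l1norm (c (x k \<omega>))) (gradf (x k \<omega>)) (H k \<omega>) (d k \<omega>)
          \<and> xibar k \<omega> = lim (\<lambda>j. xibar j \<omega>)))}"
      then obtain K tbig where \<omega>: "\<omega> \<in> space M" and Kinf: "infinite K" and tb: "tbig > 0"
        and Kp: "\<forall>k\<in>K. taubar k \<omega> = tbig
          \<and> ereal tbig > tau_trial sgm (l1norm (c (x k \<omega>))) (gradf (x k \<omega>)) (H k \<omega>) (d k \<omega>)
          \<and> xibar k \<omega> = lim (\<lambda>j. xibar j \<omega>)" by blast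
      obtain k0 where k0: "k0 \<in> K" using Kinf by (metis finite.emptyI ex_in_conv)
      have anti: "taubar j' \<omega> \<le> taubar j \<omega>" if "j \<le> j'" for j j'
        using lift_Suc_antimono_le[of "\<lambda>j. taubar j \<omega>", OF tdec[OF \<omega>] that] .
      have const: "taubar k \<omega> = tbig" if "k0 \<le> k" for k
      proof -
        have "taubar k \<omega> \<le> tbig" using anti[OF that] Kp k0 by simp
        moreover obtain k' where "k' \<ge> k" "k' \<in> K" using Kinf by (meson infinite_nat_iff_unbounded_le)
        then have "tbig \<le> taubar k \<omega>" using anti Kp by metis
        ultimately show ?thesis by simp
      qed
      have inG: "\<omega> \<in> {\<omega>\<in>space M. (\<forall>k\<ge>Suc k0. \<not>(\<omega>\<in>A k \<and> \<omega>\<in>B k)) \<and> infinite {k. \<omega>\<in>B k}}"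
      proof (intro CollectI conjI allI impI \<omega>)
        fix k assume k: "Suc k0 \<le> k"
        show "\<not>(\<omega>\<in>A k \<and> \<omega>\<in>B k)"
        proof
          assume AB: "\<omega>\<in>A k \<and> \<omega>\<in>B k"
          have "param_update eps (pt k \<omega>) (tau_trial sgm (l1norm (c (x k \<omega>))) (gbar k \<omega>) (H k \<omega>) (dbar k \<omega>)) < pt k \<omega>"
            by (rule pu_lt[OF eps sgm cn0]) (use AB in \<open>auto simp: A_def B_def\<close>)
          moreover have "taubar k \<omega> = param_update eps (pt k \<omega>) (tau_trial sgm (l1norm (c (x k \<omega>))) (gbar k \<omega>) (H k \<omega>) (dbar k \<omega>))"
            using taubar_def[THEN spec, of k, THEN bspec, OF \<omega>] unfolding pt_def by simp
          ultimately have "taubar k \<omega> < pt k \<omega>" by simp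
          moreover have "pt k \<omega> = tbig" using k const by (simp add: pt_def)
          moreover have "taubar k \<omega> = tbig" using k const by simp
          ultimately show False by simp
        qed
      next
        have "{k\<in>K. k0 < k} \<subseteq> {k. \<omega>\<in>B k}"
        proof
          fix k assume "k \<in> {k\<in>K. k0 < k}"
          then have k: "k \<in> K" "k0 < k" by auto
          have "pt k \<omega> = tbig" using k const by (simp add: pt_def)
          then show "k \<in> {k. \<omega>\<in>B k}" using Kp k \<omega> by (simp add: B_def)
        qed
        moreover have "infinite {k\<in>K. k0 < k}"
        proof -
          have "{k\<in>K. k0 < k} = K - {..k0}" by auto
          then show ?thesis using Kinf by (simp add: Diff_infinite_finite)
        qed
        ultimately show "infinite {k. \<omega>\<in>B k}" by (rule infinite_super)
      qed
      then have "\<omega> \<in> G (Suc k0)" unfolding G_def .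
      then show "\<omega> \<in> (\<Union>n. N0 n)" using N0(2)[of "Suc k0"] by blast
    qed
  qed
qed

end
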